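(* Let $J'=(z_w,z_w')$ be a nonempty open interval, let $r:J'\to\mathbb{R}$ be differentiable and non-increasing, and let $h:J'\to\mathbb{R}$ be differentiable with $\dot h(z)=1+h(z)^2-2r(z)h(z)$ on $J'$, having exactly one zero $z_*\in J'$. Let $G(z)=z-\dfrac{2h(z)}{2+h(z)^2-2r(z)h(z)}$. (1) If $0<r(z)<1$ for all $z\in(z_*,z_w')$, then $G$ is differentiable on $(z_*,z_w')$ and $\dot G(z)\ge 0$ for all $z\in(z_*,z_w')$. (2) If $-1<r(z)<0$ for all $z\in(z_w,z_* )$, then $G$ is differentiable on $(z_w,z_* )$ and $\dot G(z)\ge 0$ for all $z\in(z_w,z_* )$.
   Context: $\dot{}$ denotes differentiation with respect to $z$. Here $h<0$ on $(z_w,z_* )$ and $h>0$ on $(z_*,z_w')$ (consequence of $h(z_* )=0$, $\dot h(z_* )=1$ and uniqueness of the zero). *)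

theory Defs
  imports "HOL-Analysis.Analysis"
begin

end

theory Submission
  imports Defs
begin

lemma pt:
  fixes r h :: "real \<Rightarrow> real" and zw zw' z :: real
  assumes r_diff: "\<forall>z\<in>{zw<..<zw'}. r differentiable (at z)"
    and r_noninc: "\<forall>x\<in>{zw<..<zw'}. \<forall>y\<in>{zw<..<zw'}. x \<le> y \<longrightarrow> r y \<le> r x"
    and h_ode: "\<forall>z\<in>{zw<..<zw'}. (h has_real_derivative (1 + (h z)\<^sup>2 - 2 * r z * h z)) (at z)"
    and z: "z \<in> {zw<..<zw'}" and rb: "-1 < r z" "r z < 1"
    and Geq: "G = (\<lambda>z. z - 2 * h z / (2 + (h z)\<^sup>2 - 2 * r z * h z))"
  shows "G differentiable (at z) \<and> deriv G z \<ge> 0"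
proof -
  obtain r' where rd: "(r has_real_derivative r') (at z)"
    using r_diff z by (meson real_differentiable_def differentiable_def has_real_derivative_iff)
  have r'le: "r' \<le> 0"
  proof (rule ccontr)
    assume "\<not> r' \<le> 0"
    then obtain d where d: "d > 0" "\<forall>e>0. e < d \<longrightarrow> r z < r (z + e)"
      using DERIV_pos_inc_right[OF rd] by force
    define e where "e = min (d/2) ((zw' - z)/2)"
    have "e > 0" "e < d" using d z by (auto simp: e_def)
    moreover have "e \<le> (zw' - z)/2" unfolding e_def by (simp add: min_def)
    moreover have "z + e \<in> {zw<..<zw'}" using z \<open>e > 0\<close> \<open>e \<le> (zw' - z)/2\<close> by simp
    ultimately have zin: "z + e \<in> {zw<..<zw'}" and e0: "e > 0" and ed: "e < d" by auto
    have c1: "r z < r (z + e)" using d(2) e0 ed by blast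
    have "z \<le> z + e" using e0 by simp
    then have c2: "r (z + e) \<le> r z" using r_noninc z zin by blast
    show False using c1 c2 by linarith
  qed
  define H where "H = h z"
  define R where "R = r z"
  have hd: "(h has_real_derivative (1 + H\<^sup>2 - 2 * R * H)) (at z)"
    using h_ode z by (simp add: H_def R_def)
  have Dpos: "2 + H\<^sup>2 - 2 * R * H > 0"
  proof -
    have "2 + H\<^sup>2 - 2 * R * H = (H - R)\<^sup>2 + (2 - R\<^sup>2)" by (simp add: power2_eq_square algebra_simps)
    moreover have "R\<^sup>2 < 1" using rb by (simp add: abs_square_less_1 R_def abs_less_iff)
    moreover have "(H - R)\<^sup>2 \<ge> 0" by simp
    ultimately show ?thesis by linarith
  qed
  define h' where "h' = 1 + H\<^sup>2 - 2 * R * H"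
  define D where "D = 2 + H\<^sup>2 - 2 * R * H"
  define D' where "D' = 2 * H * h' - 2 * (r' * H + R * h')"
  have Dd: "((\<lambda>z. 2 + (h z)\<^sup>2 - 2 * r z * h z) has_real_derivative D') (at z)"
    unfolding D'_def h'_def
    by (auto intro!: derivative_eq_intros hd rd simp: H_def R_def)
  have nz: "2 + (h z)\<^sup>2 - 2 * r z * h z \<noteq> 0" using Dpos by (simp add: H_def R_def)
  have Gd: "((\<lambda>z. z - 2 * h z / (2 + (h z)\<^sup>2 - 2 * r z * h z)) has_real_derivative
      (1 - (2 * h' * D - 2 * H * D') / D\<^sup>2)) (at z)"
    apply (rule DERIV_cong[OF DERIV_diff[OF DERIV_ident DERIV_divide[OF DERIV_cmult[OF hd] Dd nz]]])
    by (simp add: D_def h'_def H_def R_def power2_eq_square)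
  have num: "D\<^sup>2 - (2 * h' * D - 2 * H * D') = H\<^sup>2 * (3*H\<^sup>2 - 8*R*H + 4*R\<^sup>2 + 2) - 4 * r' * H\<^sup>2"
    unfolding D_def D'_def h'_def by (simp add: power2_eq_square algebra_simps)
  have q: "3*H\<^sup>2 - 8*R*H + 4*R\<^sup>2 + 2 \<ge> 0"
  proof -
    have "3*H\<^sup>2 - 8*R*H + 4*R\<^sup>2 + 2 = 3 * (H - 4/3*R)\<^sup>2 + (2 - 4/3 * R\<^sup>2)"
      by (simp add: power2_eq_square algebra_simps)
    moreover have "R\<^sup>2 < 1" using rb by (simp add: abs_square_less_1 R_def abs_less_iff)
    moreover have "(H - 4/3*R)\<^sup>2 \<ge> 0" by simp
    ultimately show ?thesis by linarith
  qed
  have "1 - (2 * h' * D - 2 * H * D') / D\<^sup>2 = (D\<^sup>2 - (2 * h' * D - 2 * H * D')) / D\<^sup>2"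
    using Dpos D_def by (simp add: field_simps)
  also have "\<dots> \<ge> 0"
  proof -
    have a1: "H\<^sup>2 * (3*H\<^sup>2 - 8*R*H + 4*R\<^sup>2 + 2) \<ge> 0" using q by simp
    have a2: "r' * H\<^sup>2 \<le> 0" using r'le by (simp add: mult_nonpos_nonneg)
    have "D\<^sup>2 - (2 * h' * D - 2 * H * D') \<ge> 0" unfolding num using a1 a2 by linarith
    then show ?thesis by simp
  qed
  finally have nn: "0 \<le> 1 - (2 * h' * D - 2 * H * D') / D\<^sup>2" .
  have dd: "deriv (\<lambda>z. z - 2 * h z / (2 + (h z)\<^sup>2 - 2 * r z * h z)) z = 1 - (2 * h' * D - 2 * H * D') / D\<^sup>2"
    using Gd by (rule DERIV_imp_deriv)
  have df: "(\<lambda>z. z - 2 * h z / (2 + (h z)\<^sup>2 - 2 * r z * h z)) differentiable (at z)"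
    unfolding real_differentiable_def using Gd by (rule exI)
  have "G differentiable (at z)" using df Geq by simp
  moreover have "deriv G z \<ge> 0" using dd nn Geq by simp
  ultimately show ?thesis by (rule conjI)
qed

theorem lemma3p3:
  fixes r h :: "real \<Rightarrow> real" and zw zw' zs :: real
  assumes "zw < zw'"
    and r_diff: "\<forall>z\<in>{zw<..<zw'}. r differentiable (at z)"
    and r_noninc: "\<forall>x\<in>{zw<..<zw'}. \<forall>y\<in>{zw<..<zw'}. x \<le> y \<longrightarrow> r y \<le> r x"
    and h_ode: "\<forall>z\<in>{zw<..<zw'}. (h has_real_derivative (1 + (h z)\<^sup>2 - 2 * r z * h z)) (at z)"
    and zs_in: "zs \<in> {zw<..<zw'}" and h_zs: "h zs = 0"
    and zs_unique: "\<forall>z\<in>{zw<..<zw'}. h z = 0 \<longrightarrow> z = zs"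
  defines "G \<equiv> (\<lambda>z. z - 2 * h z / (2 + (h z)\<^sup>2 - 2 * r z * h z))"
  shows "((\<forall>z\<in>{zs<..<zw'}. 0 < r z \<and> r z < 1) \<longrightarrow>
            (\<forall>z\<in>{zs<..<zw'}. G differentiable (at z) \<and> deriv G z \<ge> 0))
       \<and> ((\<forall>z\<in>{zw<..<zs}. -1 < r z \<and> r z < 0) \<longrightarrow>
            (\<forall>z\<in>{zw<..<zs}. G differentiable (at z) \<and> deriv G z \<ge> 0))"
proof (rule conjI; intro impI ballI)
  fix z assume a: "\<forall>z\<in>{zs<..<zw'}. 0 < r z \<and> r z < 1" and z: "z \<in> {zs<..<zw'}"
  have zi: "z \<in> {zw<..<zw'}" using z zs_in by auto
  have "-1 < r z \<and> r z < 1" using bspec[OF a z] by linarith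
  then have "-1 < r z" "r z < 1" by auto
  from pt[OF r_diff r_noninc h_ode zi this G_def[THEN meta_eq_to_obj_eq]] show "G differentiable (at z) \<and> deriv G z \<ge> 0" .
next
  fix z assume a: "\<forall>z\<in>{zw<..<zs}. -1 < r z \<and> r z < 0" and z: "z \<in> {zw<..<zs}"
  have zi: "z \<in> {zw<..<zw'}" using z zs_in by auto
  have "-1 < r z \<and> r z < 1" using bspec[OF a z] by linarith
  then have "-1 < r z" "r z < 1" by auto
  from pt[OF r_diff r_noninc h_ode zi this G_def[THEN meta_eq_to_obj_eq]] show "G differentiable (at z) \<and> deriv G z \<ge> 0" .
qed

end
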